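(* Let $\phi(x,y)=\lambda(x,y)\alpha(x,y)-\beta(x,y)$ be the Riley polynomial of $K_2=K(17,7)$ (the case $l=2$). Then for every $n\geq 5$, $\phi(2\cos(\pi/n),y)$ has a real root $y_n>2$.
   Context: $\lambda(x,y)=9x^2-12x^4+4x^6-5y+10x^2y+2x^4y-4x^6y-11x^2y^2+8x^4y^2+x^6y^2+5y^3-4x^2y^3-3x^4y^3+3x^2y^4-y^5$, $\alpha(x,y)=1-4x^2+2x^4+2y-x^2y-x^4y-y^2+2x^2y^2-y^3$, $\beta(x,y)=-1+x^2-y$. $K(p,q)$ is the two-bridge knot with fraction $p/q$. *)

theory Defs
  imports Complex_Main
begin

definition lam :: "real \<Rightarrow> real \<Rightarrow> real" where
  "lam x y = 9*x^2 - 12*x^4 + 4*x^6 - 5*y + 10*x^2*y + 2*x^4*y - 4*x^6*y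
     - 11*x^2*y^2 + 8*x^4*y^2 + x^6*y^2 + 5*y^3 - 4*x^2*y^3 - 3*x^4*y^3
     + 3*x^2*y^4 - y^5"

definition alpha :: "real \<Rightarrow> real \<Rightarrow> real" where
  "alpha x y = 1 - 4*x^2 + 2*x^4 + 2*y - x^2*y - x^4*y - y^2 + 2*x^2*y^2 - y^3"

definition beta :: "real \<Rightarrow> real \<Rightarrow> real" where
  "beta x y = -1 + x^2 - y"

definition riley_phi :: "real \<Rightarrow> real \<Rightarrow> real" where
  "riley_phi x y = lam x y * alpha x y - beta x y"

end

theory Submission
  imports Defs "HOL-Analysis.Complex_Transcendental"
begin

definition Q :: "real \<Rightarrow> real \<Rightarrow> real" where
  "Q t y = (9*t - 12*t^2 + 4*t^3 - 5*y + 10*t*y + 2*t^2*y - 4*t^3*y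
     - 11*t*y^2 + 8*t^2*y^2 + t^3*y^2 + 5*y^3 - 4*t*y^3 - 3*t^2*y^3
     + 3*t*y^4 - y^5) * (1 - 4*t + 2*t^2 + 2*y - t*y - t^2*y - y^2 + 2*t*y^2 - y^3)
     - (-1 + t - y)"

lemma phi_Q: "riley_phi x y = Q (x^2) y"
  unfolding riley_phi_def lam_def alpha_def beta_def Q_def
  by (simp add: power_mult[symmetric])

lemma term_bound:
  fixes s h c :: real
  assumes "0 \<le> s" "s \<le> h"
  shows "min 0 c * h^k \<le> c * s^k"
proof (cases "c \<ge> 0")
  case True thus ?thesis using assms by simp
next
  case False
  have "s^k \<le> h^k" using assms by (simp add: power_mono)
  thus ?thesis using False by (simp add: mult_left_mono_neg)
qed

lemma poly5_pos:
  fixes s h c0 c1 c2 c3 c4 c5 :: real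
  assumes "0 \<le> s" "s \<le> h"
    and "c0 + min 0 c1 * h^1 + min 0 c2 * h^2 + min 0 c3 * h^3 + min 0 c4 * h^4 + min 0 c5 * h^5 > 0"
  shows "c0 + c1 * s^1 + c2 * s^2 + c3 * s^3 + c4 * s^4 + c5 * s^5 > 0"
  using term_bound[OF assms(1,2), of c1 1] term_bound[OF assms(1,2), of c2 2]
    term_bound[OF assms(1,2), of c3 3] term_bound[OF assms(1,2), of c4 4]
    term_bound[OF assms(1,2), of c5 5] assms(3) by linarith

lemma piece0:
  assumes "(18/5) \<le> t" "t \<le> (19/5)"
  shows "Q t (11/4) < 0"
proof -
  define s where "s = t - (18/5)"
  have e: "- Q ((18/5) + s) (11/4) = (138099479/204800000) + (7775163/2048000) * s^1 + (-628153/51200) * s^2 + (5151/512) * s^3 + (-873/256) * s^4 + (27/64) * s^5"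
    unfolding Q_def by (simp add: field_simps) algebra
  have "(138099479/204800000) + (7775163/2048000) * s^1 + (-628153/51200) * s^2 + (5151/512) * s^3 + (-873/256) * s^4 + (27/64) * s^5 > 0"
    by (rule poly5_pos[where h="(1/5)"]) (use assms in \<open>simp_all add: s_def power_divide\<close>)
  moreover have "t = (18/5) + s" by (simp add: s_def)
  ultimately show ?thesis using e by simp
qed

lemma piece1:
  assumes "(19/5) \<le> t" "t \<le> (4)"
  shows "Q t (11/4) < 0"
proof -
  define s where "s = t - (19/5)"
  have e: "- Q ((19/5) + s) (11/4) = (208491667/204800000) + (-19381/2048000) * s^1 + (-359269/51200) * s^2 + (19203/2560) * s^3 + (-765/256) * s^4 + (27/64) * s^5"
    unfolding Q_def by (simp add: field_simps) algebra
  have "(208491667/204800000) + (-19381/2048000) * s^1 + (-359269/51200) * s^2 + (19203/2560) * s^3 + (-765/256) * s^4 + (27/64) * s^5 > 0"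
    by (rule poly5_pos[where h="(1/5)"]) (use assms in \<open>simp_all add: s_def power_divide\<close>)
  moreover have "t = (19/5) + s" by (simp add: s_def)
  ultimately show ?thesis using e by simp
qed

lemma piece2:
  assumes "(64/25) \<le> t" "t \<le> (73/25)"
  shows "Q t (4) > 0"
proof -
  define s where "s = t - (64/25)"
  have e: "Q ((64/25) + s) (4) = (25908693833/9765625) + (-330290568/78125) * s^1 + (8337356/3125) * s^2 + (-104326/125) * s^3 + (648/5) * s^4 + (-8) * s^5"
    unfolding Q_def by (simp add: field_simps) algebra
  have "(25908693833/9765625) + (-330290568/78125) * s^1 + (8337356/3125) * s^2 + (-104326/125) * s^3 + (648/5) * s^4 + (-8) * s^5 > 0"
    by (rule poly5_pos[where h="(9/25)"]) (use assms in \<open>simp_all add: s_def power_divide\<close>)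
  moreover have "t = (64/25) + s" by (simp add: s_def)
  ultimately show ?thesis using e by simp
qed

lemma piece3:
  assumes "(73/25) \<le> t" "t \<le> (82/25)"
  shows "Q t (4) > 0"
proof -
  define s where "s = t - (73/25)"
  have e: "Q ((73/25) + s) (4) = (14062764431/9765625) + (-203732298/78125) * s^1 + (5823818/3125) * s^2 + (-82294/125) * s^3 + (576/5) * s^4 + (-8) * s^5"
    unfolding Q_def by (simp add: field_simps) algebra
  have "(14062764431/9765625) + (-203732298/78125) * s^1 + (5823818/3125) * s^2 + (-82294/125) * s^3 + (576/5) * s^4 + (-8) * s^5 > 0"
    by (rule poly5_pos[where h="(9/25)"]) (use assms in \<open>simp_all add: s_def power_divide\<close>)
  moreover have "t = (73/25) + s" by (simp add: s_def)
  ultimately show ?thesis using e by simp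
qed

lemma piece4:
  assumes "(82/25) \<le> t" "t \<le> (91/25)"
  shows "Q t (4) > 0"
proof -
  define s where "s = t - (82/25)"
  have e: "Q ((82/25) + s) (4) = (6971918969/9765625) + (-117273888/78125) * s^1 + (3870152/3125) * s^2 + (-62854/125) * s^3 + (504/5) * s^4 + (-8) * s^5"
    unfolding Q_def by (simp add: field_simps) algebra
  have "(6971918969/9765625) + (-117273888/78125) * s^1 + (3870152/3125) * s^2 + (-62854/125) * s^3 + (504/5) * s^4 + (-8) * s^5 > 0"
    by (rule poly5_pos[where h="(9/25)"]) (use assms in \<open>simp_all add: s_def power_divide\<close>)
  moreover have "t = (82/25) + s" by (simp add: s_def)
  ultimately show ?thesis using e by simp
qed

lemma piece5:
  assumes "(91/25) \<le> t" "t \<le> (4)"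
  shows "Q t (4) > 0"
proof -
  define s where "s = t - (91/25)"
  have e: "Q ((91/25) + s) (4) = (3048964067/9765625) + (-61467498/78125) * s^1 + (2406374/3125) * s^2 + (-46006/125) * s^3 + (432/5) * s^4 + (-8) * s^5"
    unfolding Q_def by (simp add: field_simps) algebra
  have "(3048964067/9765625) + (-61467498/78125) * s^1 + (2406374/3125) * s^2 + (-46006/125) * s^3 + (432/5) * s^4 + (-8) * s^5 > 0"
    by (rule poly5_pos[where h="(9/25)"]) (use assms in \<open>simp_all add: s_def power_divide\<close>)
  moreover have "t = (91/25) + s" by (simp add: s_def)
  ultimately show ?thesis using e by simp
qed

lemma Q2: "Q t 2 = 2*t^2 - 12*t + 17"
  unfolding Q_def by (simp add: field_simps) algebra

lemma neg_part:
  assumes "64/25 \<le> t" "t \<le> 4"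
  shows "\<exists>y0. 2 \<le> y0 \<and> y0 \<le> 4 \<and> Q t y0 < 0"
proof (cases "t \<le> 18/5")
  case True
  have "(t - 64/25) * (18/5 - t) \<ge> 0" using True assms by simp
  moreover have "(t - 64/25) * (18/5 - t) = 154/25*t - 1152/125 - t^2" by (simp add: field_simps power2_eq_square)
  ultimately have "t^2 \<le> 154/25*t - 1152/125" by linarith
  hence "Q t 2 < 0" using True unfolding Q2 by linarith
  thus ?thesis by (intro exI[of _ 2]) simp
next
  case False
  show ?thesis
  proof (cases "t \<le> 19/5")
    case True
    thus ?thesis using False piece0[of t] by (intro exI[of _ "11/4"]) simp
  next
    case F2: False
    thus ?thesis using assms piece1[of t] by (intro exI[of _ "11/4"]) simp
  qed
qed

lemma pos_part:
  assumes "64/25 \<le> t" "t \<le> 4"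
  shows "Q t 4 > 0"
  using assms piece2[of t] piece3[of t] piece4[of t] piece5[of t] by linarith

lemma root_exists:
  assumes "64/25 \<le> t" "t \<le> 4"
  shows "\<exists>y. y > 2 \<and> Q t y = 0"
proof -
  obtain y0 where y0: "2 \<le> y0" "y0 \<le> 4" "Q t y0 < 0" using neg_part[OF assms] by blast
  have "\<exists>y. y0 \<le> y \<and> y \<le> 4 \<and> Q t y = 0"
    by (rule IVT[where f="\<lambda>y. Q t y"]) (use y0 pos_part[OF assms] in \<open>auto simp: Q_def intro!: continuous_intros\<close>)
  then obtain y where "y0 \<le> y" "Q t y = 0" by blast
  with y0 have "y \<noteq> y0" by auto
  with \<open>y0 \<le> y\<close> y0 have "y > 2" by linarith
  with \<open>Q t y = 0\<close> show ?thesis by blast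
qed

theorem proposition6p10:
  fixes n :: nat
  assumes "n \<ge> 5"
  shows "\<exists>y::real. y > 2 \<and> riley_phi (2 * cos (pi / real n)) y = 0"
proof -
  define u where "u = pi / (2 * real n)"
  have n5: "real n \<ge> 5" using assms by simp
  have u0: "u \<ge> 0" unfolding u_def by simp
  have ub: "u \<le> pi / 10" unfolding u_def using n5 by (intro divide_left_mono) auto
  have pil: "pi \<le> 3.15" using pi_approx by simp
  have usmall: "u \<le> 0.315" using ub pil by simp
  have "sin u \<le> u" using u0 by (rule sin_x_le_x)
  moreover have "sin u \<ge> 0" using u0 usmall pi_approx by (intro sin_ge_zero) auto
  ultimately have "(sin u)^2 \<le> u^2" by (simp add: power_mono)
  moreover have "u^2 \<le> 0.315^2" using u0 usmall by (simp add: power_mono)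
  ultimately have s2: "(sin u)^2 \<le> 0.1" by (simp add: power_divide)
  have "cos (pi / real n) = cos (2 * u)" unfolding u_def by simp
  also have "\<dots> = 1 - 2 * (sin u)^2" by (rule cos_double_sin)
  finally have c: "cos (pi / real n) = 1 - 2 * (sin u)^2" .
  have c1: "cos (pi / real n) \<ge> 4/5" using c s2 by simp
  have t1: "64/25 \<le> (2 * cos (pi / real n))^2"
  proof -
    have "(8/5::real)^2 \<le> (2 * cos (pi / real n))^2" using c1 by (intro power_mono) auto
    thus ?thesis by (simp add: power_divide)
  qed
  have t2: "(2 * cos (pi / real n))^2 \<le> 4"
  proof -
    have "(cos (pi / real n))^2 \<le> 1" by (simp add: cos_squared_eq)
    thus ?thesis by (simp add: power_mult_distrib)
  qed
  show ?thesis using root_exists[OF t1 t2] by (simp add: phi_Q)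
qed

end
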